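(* Let $\hat\sigma_x,\hat\sigma_y,\hat\sigma_z$ be the Pauli matrices and, for $m\in\{-\tfrac12,\tfrac12\}$, $\alpha\in[0,2\pi]$, $\beta\in[0,\pi]$, let $$\hat U(m,\alpha,\beta)=\tfrac12\hat I-m\cos\alpha\sin\beta\,\hat\sigma_x-m\sin\alpha\sin\beta\,\hat\sigma_y+m\cos\beta\,\hat\sigma_z .$$ For a qubit state (density matrix) $\hat\rho$ on $\mathbb{C}^2$ define its tomogram $w_{\hat\rho}(m,\alpha,\beta)=\mathrm{Tr}\big(\hat\rho\,\hat U(m,\alpha,\beta)\big)$, and let $\mathfrak T(\mathbb{C}^2)$ be the set of all such tomograms. For $a\in\{x,y,z\}$ let $\breve\Sigma_a$ be the map on $\mathfrak T(\mathbb{C}^2)$ defined by $\breve\Sigma_a(w_{\hat\rho})=w_{\hat\sigma_a\hat\rho\hat\sigma_a}$. Write ${\bf x}=(m,\alpha,\beta)$, ${\bf x}'=(m',\alpha',\beta')$ and $$\int g({\bf x}')\,d{\bf x}':=\sum_{m'=\pm1/2}\frac{1}{2\pi}\int_0^{2\pi}\!\!\int_0^{\pi} g(m',\alpha',\beta')\sin\beta'\,d\beta'\,d\alpha'.$$ Then for each $a\in\{x,y,z\}$ and every $w\in\mathfrak T(\mathbb{C}^2)$, $$\breve\Sigma_a(w)({\bf x})=\int K_a({\bf x};{\bf x}')\,w({\bf x}')\,d{\bf x}',$$ where, with $\delta_{mm'}$ the Kronecker delta, $$K_x({\bf x};{\bf x}')=\tfrac12\delta_{mm'}\big(1+3\cos\alpha\sin\beta\cos\alpha'\sin\beta'-3\sin\alpha\sin\beta\sin\alpha'\sin\beta'-3\cos\beta\cos\beta'\big),$$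 $$K_y({\bf x};{\bf x}')=\tfrac12\delta_{mm'}\big(1-3\cos\alpha\sin\beta\cos\alpha'\sin\beta'+3\sin\alpha\sin\beta\sin\alpha'\sin\beta'-3\cos\beta\cos\beta'\big),$$ $$K_z({\bf x};{\bf x}')=\tfrac12\delta_{mm'}\big(1-3\cos\alpha\sin\beta\cos\alpha'\sin\beta'-3\sin\alpha\sin\beta\sin\alpha'\sin\beta'+3\cos\beta\cos\beta'\big).$$
   Context: A qubit state is a positive semidefinite $2\times2$ complex matrix of trace one. $\hat I$ denotes the $2\times 2$ identity matrix. *)

theory Defs
  imports "HOL-Analysis.Analysis"
begin

type_synonym cmat2 = "complex^2^2"

definition Id2 :: cmat2 where "Id2 = mat 1"

definition sigma_x :: cmat2 where
  "sigma_x = (\<chi> i j. if i \<noteq> j then 1 else 0)"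

definition sigma_y :: cmat2 where
  "sigma_y = (\<chi> i j. if i = 0 \<and> j = 1 then - \<i> else if i = 1 \<and> j = 0 then \<i> else 0)"

definition sigma_z :: cmat2 where
  "sigma_z = (\<chi> i j. if i = j then (if i = 0 then 1 else -1) else 0)"

definition psd2 :: "cmat2 \<Rightarrow> bool" where
  "psd2 A \<longleftrightarrow> (\<forall>v::complex^2.
     let q = (\<Sum>i\<in>UNIV. \<Sum>j\<in>UNIV. cnj (v$i) * A$i$j * v$j) in Im q = 0 \<and> Re q \<ge> 0)"

definition qubit_state :: "cmat2 \<Rightarrow> bool" where
  "qubit_state \<rho> \<longleftrightarrow> psd2 \<rho> \<and> trace \<rho> = 1"

definition cscale :: "complex \<Rightarrow> cmat2 \<Rightarrow> cmat2" where
  "cscale c A = (\<chi> i j. c * A$i$j)"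

definition U_op :: "real \<Rightarrow> real \<Rightarrow> real \<Rightarrow> cmat2" where
  "U_op m \<alpha> \<beta> = cscale (1/2) Id2
     - cscale (complex_of_real (m * cos \<alpha> * sin \<beta>)) sigma_x
     - cscale (complex_of_real (m * sin \<alpha> * sin \<beta>)) sigma_y
     + cscale (complex_of_real (m * cos \<beta>)) sigma_z"

definition tomogram :: "cmat2 \<Rightarrow> real \<Rightarrow> real \<Rightarrow> real \<Rightarrow> complex" where
  "tomogram \<rho> m \<alpha> \<beta> = trace (\<rho> ** U_op m \<alpha> \<beta>)"

definition tomograms :: "(real \<Rightarrow> real \<Rightarrow> real \<Rightarrow> complex) set" where
  "tomograms = {tomogram \<rho> | \<rho>. qubit_state \<rho>}"

definition tint :: "(real \<Rightarrow> real \<Rightarrow> real \<Rightarrow> complex) \<Rightarrow> complex" where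
  "tint g = (\<Sum>m'\<in>{-1/2, 1/2::real}.
     complex_of_real (1 / (2*pi)) *
       integral {0..2*pi} (\<lambda>\<alpha>'. integral {0..pi} (\<lambda>\<beta>'. g m' \<alpha>' \<beta>' * complex_of_real (sin \<beta>'))))"

definition kdelta :: "real \<Rightarrow> real \<Rightarrow> real" where
  "kdelta m m' = (if m = m' then 1 else 0)"

datatype pauli_axis = AX | AY | AZ

definition pauli :: "pauli_axis \<Rightarrow> cmat2" where
  "pauli a = (case a of AX \<Rightarrow> sigma_x | AY \<Rightarrow> sigma_y | AZ \<Rightarrow> sigma_z)"

definition ksign :: "pauli_axis \<Rightarrow> real \<times> real \<times> real" where
  "ksign a = (case a of AX \<Rightarrow> (1, -1, -1) | AY \<Rightarrow> (-1, 1, -1) | AZ \<Rightarrow> (-1, -1, 1))"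

definition kernel :: "pauli_axis \<Rightarrow> real \<Rightarrow> real \<Rightarrow> real \<Rightarrow> real \<Rightarrow> real \<Rightarrow> real \<Rightarrow> real" where
  "kernel a m \<alpha> \<beta> m' \<alpha>' \<beta>' = (case ksign a of (s1, s2, s3) \<Rightarrow>
     1/2 * kdelta m m' * (1 + 3 * s1 * cos \<alpha> * sin \<beta> * cos \<alpha>' * sin \<beta>'
                              + 3 * s2 * sin \<alpha> * sin \<beta> * sin \<alpha>' * sin \<beta>'
                              + 3 * s3 * cos \<beta> * cos \<beta>'))"

definition Sigma_breve :: "pauli_axis \<Rightarrow> (real \<Rightarrow> real \<Rightarrow> real \<Rightarrow> complex) \<Rightarrow> (real \<Rightarrow> real \<Rightarrow> real \<Rightarrow> complex)" where
  "Sigma_breve a w = tomogram (pauli a ** (SOME \<rho>. qubit_state \<rho> \<and> tomogram \<rho> = w) ** pauli a)"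

end

theory Submission imports Defs begin

lemma ftc_real:
  fixes F f :: "real \<Rightarrow> real"
  assumes "a \<le> b" "\<And>x. (F has_real_derivative f x) (at x)"
  shows "(f has_integral (F b - F a)) {a..b}"
  apply (rule fundamental_theorem_of_calculus[OF assms(1)])
  using assms(2) by (simp add: has_real_derivative_iff_has_vector_derivative[symmetric] has_field_derivative_at_within)

lemma sc1: "cos x * cos x + sin x * sin x = (1::real)"
  using sin_cos_squared_add[of x] by (simp add: power2_eq_square)

lemma sc2: "cos x * (cos x * 2) + sin x * (sin x * 2) = (2::real)"
  using sc1[of x] by argo

lemma sc3: "sin x - sin x * (cos x)^2 = (sin x ^ 3::real)"
proof -
  have "sin x ^ 3 = sin x * sin x ^ 2" by (simp add: power3_eq_cube power2_eq_square)
  also have "\<dots> = sin x * (1 - cos x ^ 2)" by (simp only: sin_squared_eq)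
  also have "\<dots> = sin x - sin x * cos x ^ 2" by (simp add: right_diff_distrib)
  finally show ?thesis by simp
qed

lemma i_sin: "((\<lambda>x. sin x) has_integral 2) {0..pi}"
proof -
  have "((\<lambda>x. sin x) has_integral ((\<lambda>x. - cos x) pi - (\<lambda>x. - cos x) 0)) {0..pi}"
    apply (rule ftc_real) apply simp
    apply (rule derivative_eq_intros refl | simp)+
    done
  then show ?thesis by simp
qed

lemma i_sin2: "((\<lambda>x. sin x ^ 2) has_integral pi/2) {0..pi}"
proof -
  have "((\<lambda>x. sin x ^ 2) has_integral ((\<lambda>x. (x - sin x * cos x)/2) pi - (\<lambda>x. (x - sin x * cos x)/2) 0)) {0..pi}"
    apply (rule ftc_real) apply simp
    apply (rule derivative_eq_intros refl | simp)+
    subgoal for x unfolding power2_eq_square by (simp add: field_simps sc2)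
    done
  then show ?thesis by simp
qed

lemma i_sin3: "((\<lambda>x. sin x ^ 3) has_integral 4/3) {0..pi}"
proof -
  have "((\<lambda>x. sin x ^ 3) has_integral ((\<lambda>x. cos x ^ 3 / 3 - cos x) pi - (\<lambda>x. cos x ^ 3 / 3 - cos x) 0)) {0..pi}"
    apply (rule ftc_real) apply simp
    apply (rule derivative_eq_intros refl | simp)+
    subgoal for x using sc3[of x] by simp
    done
  then show ?thesis by simp
qed

lemma i_cs: "((\<lambda>x. cos x * sin x) has_integral 0) {0..pi}"
proof -
  have "((\<lambda>x. cos x * sin x) has_integral ((\<lambda>x. sin x ^ 2 / 2) pi - (\<lambda>x. sin x ^ 2 / 2) 0)) {0..pi}"
    apply (rule ftc_real) apply simp
    apply (rule derivative_eq_intros refl | simp)+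
    done
  then show ?thesis by simp
qed

lemma i_cs2: "((\<lambda>x. cos x * sin x ^ 2) has_integral 0) {0..pi}"
proof -
  have "((\<lambda>x. cos x * sin x ^ 2) has_integral ((\<lambda>x. sin x ^ 3 / 3) pi - (\<lambda>x. sin x ^ 3 / 3) 0)) {0..pi}"
    apply (rule ftc_real) apply simp
    apply (rule derivative_eq_intros refl | simp)+
    done
  then show ?thesis by simp
qed

lemma i_c2s: "((\<lambda>x. cos x ^ 2 * sin x) has_integral 2/3) {0..pi}"
proof -
  have "((\<lambda>x. cos x ^ 2 * sin x) has_integral ((\<lambda>x. (cos x ^ 3) / (-3)) pi - (\<lambda>x. (cos x ^ 3) / (-3)) 0)) {0..pi}"
    apply (rule ftc_real) apply simp
    apply (rule derivative_eq_intros refl | simp)+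
    done
  then show ?thesis by simp
qed

lemma o_cos: "((\<lambda>x. cos x) has_integral 0) {0..2*pi}"
proof -
  have "((\<lambda>x. cos x) has_integral ((\<lambda>x. sin x) (2*pi) - (\<lambda>x. sin x) 0)) {0..2*pi}"
    apply (rule ftc_real) apply simp
    apply (rule derivative_eq_intros refl | simp)+
    done
  then show ?thesis by simp
qed

lemma o_sin: "((\<lambda>x. sin x) has_integral 0) {0..2*pi}"
proof -
  have "((\<lambda>x. sin x) has_integral ((\<lambda>x. - cos x) (2*pi) - (\<lambda>x. - cos x) 0)) {0..2*pi}"
    apply (rule ftc_real) apply simp
    apply (rule derivative_eq_intros refl | simp)+
    done
  then show ?thesis by simp
qed

lemma o_cos2: "((\<lambda>x. cos x ^ 2) has_integral pi) {0..2*pi}"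
proof -
  have "((\<lambda>x. cos x ^ 2) has_integral ((\<lambda>x. (x + sin x * cos x)/2) (2*pi) - (\<lambda>x. (x + sin x * cos x)/2) 0)) {0..2*pi}"
    apply (rule ftc_real) apply simp
    apply (rule derivative_eq_intros refl | simp)+
    subgoal for x unfolding power2_eq_square by (simp add: field_simps sc2)
    done
  then show ?thesis by simp
qed

lemma o_sin2: "((\<lambda>x. sin x ^ 2) has_integral pi) {0..2*pi}"
proof -
  have "((\<lambda>x. sin x ^ 2) has_integral ((\<lambda>x. (x - sin x * cos x)/2) (2*pi) - (\<lambda>x. (x - sin x * cos x)/2) 0)) {0..2*pi}"
    apply (rule ftc_real) apply simp
    apply (rule derivative_eq_intros refl | simp)+
    subgoal for x unfolding power2_eq_square by (simp add: field_simps sc2)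
    done
  then show ?thesis by simp
qed

lemma o_cs: "((\<lambda>x. cos x * sin x) has_integral 0) {0..2*pi}"
proof -
  have "((\<lambda>x. cos x * sin x) has_integral ((\<lambda>x. sin x ^ 2 / 2) (2*pi) - (\<lambda>x. sin x ^ 2 / 2) 0)) {0..2*pi}"
    apply (rule ftc_real) apply simp
    apply (rule derivative_eq_intros refl | simp)+
    done
  then show ?thesis by simp
qed

lemma test: "True" by simp

lemma inner_basis:
  fixes c1 c2 c3 c4 c5 c6 :: complex
  shows "((\<lambda>b. c1 * of_real (sin b) + c2 * of_real (sin b ^ 2) + c3 * of_real (cos b * sin b)
     + c4 * of_real (sin b ^ 3) + c5 * of_real (cos b * sin b ^ 2) + c6 * of_real (cos b ^ 2 * sin b))
     has_integral (c1 * of_real 2 + c2 * of_real (pi/2) + c3 * of_real 0 + c4 * of_real (4/3)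
        + c5 * of_real 0 + c6 * of_real (2/3))) {0..pi}"
  by (rule has_integral_add has_integral_mult_right has_integral_of_real i_sin i_sin2 i_cs i_sin3 i_cs2 i_c2s)+

lemma outer_basis:
  fixes e0 e1 e2 e3 e4 e5 :: complex
  shows "((\<lambda>x. e0 + e1 * of_real (cos x) + e2 * of_real (sin x) + e3 * of_real (cos x ^ 2)
     + e4 * of_real (sin x ^ 2) + e5 * of_real (cos x * sin x))
     has_integral (of_real (2*pi) * e0 + e1 * of_real 0 + e2 * of_real 0 + e3 * of_real pi
        + e4 * of_real pi + e5 * of_real 0)) {0..2*pi}"
proof -
  have c: "((\<lambda>x. e0) has_integral of_real(2*pi) * e0) {0..2*pi}"
    using has_integral_const_real[of e0 0 "2*pi"] by (simp add: scaleR_conv_of_real)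
  show ?thesis
    by (rule has_integral_add c has_integral_mult_right has_integral_of_real o_cos o_sin o_cos2 o_sin2 o_cs)+
qed

lemma J:
  fixes A X Y Z :: complex and d m' s1 s2 s3 ca sb sa cb :: real
  shows "complex_of_real (1/(2*pi)) * integral {0..2*pi} (\<lambda>\<alpha>'. integral {0..pi} (\<lambda>\<beta>'.
      complex_of_real (1/2 * d * (1 + 3* s1*ca* sb*cos \<alpha>'* sin \<beta>' + 3* s2* sa* sb* sin \<alpha>'* sin \<beta>' + 3* s3*cb*cos \<beta>'))
      * (A + complex_of_real m' * (complex_of_real (cos \<beta>') * Z + complex_of_real (cos \<alpha>' * sin \<beta>') * X
           + complex_of_real (sin \<alpha>' * sin \<beta>') * Y))
      * complex_of_real (sin \<beta>')))
    = complex_of_real d * (A + complex_of_real m' * (complex_of_real (s1*ca* sb) * X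
        + complex_of_real (s2* sa* sb) * Y + complex_of_real (s3*cb) * Z))"
proof -
  define p where "p = complex_of_real (1/2*d)"
  define k1 where "k1 = complex_of_real (3* s1*ca* sb)"
  define k2 where "k2 = complex_of_real (3* s2* sa* sb)"
  define a3 where "a3 = complex_of_real (3* s3*cb)"
  define M where "M = complex_of_real m'"
  have inner: "integral {0..pi} (\<lambda>\<beta>'.
      complex_of_real (1/2 * d * (1 + 3* s1*ca* sb*cos a* sin \<beta>' + 3* s2* sa* sb* sin a* sin \<beta>' + 3* s3*cb*cos \<beta>'))
      * (A + complex_of_real m' * (complex_of_real (cos \<beta>') * Z + complex_of_real (cos a * sin \<beta>') * X
           + complex_of_real (sin a * sin \<beta>') * Y))
      * complex_of_real (sin \<beta>'))
    = p * (2*A + 2/3*a3*M*Z) + (p * of_real (pi/2) * (M*X + k1*A)) * of_real (cos a)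
      + (p * of_real (pi/2) * (M*Y + k2*A)) * of_real (sin a)
      + (p * 4/3 * k1 * M * X) * of_real (cos a ^ 2) + (p * 4/3 * k2 * M * Y) * of_real (sin a ^ 2)
      + (p * 4/3 * (k1*M*Y + k2*M*X)) * of_real (cos a * sin a)" for a
  proof -
    define a1 where "a1 = k1 * of_real (cos a) + k2 * of_real (sin a)"
    define b1 where "b1 = M * (of_real (cos a) * X + of_real (sin a) * Y)"
    have "(\<lambda>\<beta>'.
      complex_of_real (1/2 * d * (1 + 3* s1*ca* sb*cos a* sin \<beta>' + 3* s2* sa* sb* sin a* sin \<beta>' + 3* s3*cb*cos \<beta>'))
      * (A + complex_of_real m' * (complex_of_real (cos \<beta>') * Z + complex_of_real (cos a * sin \<beta>') * X
           + complex_of_real (sin a * sin \<beta>') * Y))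
      * complex_of_real (sin \<beta>')) = (\<lambda>b. (p*A) * of_real (sin b) + (p*(b1 + a1*A)) * of_real (sin b ^ 2)
        + (p*(M*Z + a3*A)) * of_real (cos b * sin b)
     + (p*a1*b1) * of_real (sin b ^ 3) + (p*(a1*M*Z + a3*b1)) * of_real (cos b * sin b ^ 2)
     + (p*a3*M*Z) * of_real (cos b ^ 2 * sin b))"
      by (rule ext) (simp add: p_def a1_def b1_def k1_def k2_def a3_def M_def algebra_simps power2_eq_square power3_eq_cube)
    then have "integral {0..pi} (\<lambda>\<beta>'.
      complex_of_real (1/2 * d * (1 + 3* s1*ca* sb*cos a* sin \<beta>' + 3* s2* sa* sb* sin a* sin \<beta>' + 3* s3*cb*cos \<beta>'))
      * (A + complex_of_real m' * (complex_of_real (cos \<beta>') * Z + complex_of_real (cos a * sin \<beta>') * X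
           + complex_of_real (sin a * sin \<beta>') * Y))
      * complex_of_real (sin \<beta>')) = (p*A) * of_real 2 + (p*(b1 + a1*A)) * of_real (pi/2) + (p*(M*Z + a3*A)) * of_real 0
         + (p*a1*b1) * of_real (4/3) + (p*(a1*M*Z + a3*b1)) * of_real 0 + (p*a3*M*Z) * of_real (2/3)"
      using integral_unique[OF inner_basis] by simp
    also have "\<dots> = p * (2*A + 2/3*a3*M*Z) + (p * of_real (pi/2) * (M*X + k1*A)) * of_real (cos a)
      + (p * of_real (pi/2) * (M*Y + k2*A)) * of_real (sin a)
      + (p * 4/3 * k1 * M * X) * of_real (cos a ^ 2) + (p * 4/3 * k2 * M * Y) * of_real (sin a ^ 2)
      + (p * 4/3 * (k1*M*Y + k2*M*X)) * of_real (cos a * sin a)"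
      by (simp add: a1_def b1_def algebra_simps power2_eq_square add_divide_distrib)
    finally show ?thesis .
  qed
  have outer: "integral {0..2*pi} (\<lambda>a. p * (2*A + 2/3*a3*M*Z) + (p * of_real (pi/2) * (M*X + k1*A)) * of_real (cos a)
      + (p * of_real (pi/2) * (M*Y + k2*A)) * of_real (sin a)
      + (p * 4/3 * k1 * M * X) * of_real (cos a ^ 2) + (p * 4/3 * k2 * M * Y) * of_real (sin a ^ 2)
      + (p * 4/3 * (k1*M*Y + k2*M*X)) * of_real (cos a * sin a))
     = of_real (2*pi) * (p * (2*A + 2/3*a3*M*Z)) + (p * of_real (pi/2) * (M*X + k1*A)) * of_real 0
        + (p * of_real (pi/2) * (M*Y + k2*A)) * of_real 0 + (p * 4/3 * k1 * M * X) * of_real pi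
        + (p * 4/3 * k2 * M * Y) * of_real pi + (p * 4/3 * (k1*M*Y + k2*M*X)) * of_real 0"
    by (rule integral_unique[OF outer_basis])
  have pi0: "complex_of_real pi \<noteq> 0" by simp
  have e: "of_real (2*pi) * (p * (2*A + 2/3*a3*M*Z)) + (p * of_real (pi/2) * (M*X + k1*A)) * of_real 0
        + (p * of_real (pi/2) * (M*Y + k2*A)) * of_real 0 + (p * 4/3 * k1 * M * X) * of_real pi
        + (p * 4/3 * k2 * M * Y) * of_real pi + (p * 4/3 * (k1*M*Y + k2*M*X)) * of_real 0
      = of_real (2*pi) * (p*(2*A + 2/3*a3*M*Z) + p*2/3*k1*M*X + p*2/3*k2*M*Y)"
    by (simp add: algebra_simps)
  have f: "complex_of_real (1/(2*pi)) * (of_real (2*pi) * T) = T" for T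
    by (simp add: mult.assoc[symmetric] of_real_mult[symmetric] del: of_real_mult)
  have g: "p*(2*A + 2/3*a3*M*Z) + p*2/3*k1*M*X + p*2/3*k2*M*Y = complex_of_real d * (A + complex_of_real m' * (complex_of_real (s1*ca* sb) * X
        + complex_of_real (s2* sa* sb) * Y + complex_of_real (s3*cb) * Z))"
    by (simp add: p_def k1_def k2_def a3_def M_def algebra_simps)
  show ?thesis
    unfolding inner outer e f g ..
qed

lemma sum2': "sum f (UNIV::2 set) = f 0 + f 1"
proof -
  have u: "(UNIV::2 set) = {0, 1}" using exhaust_2 by (metis UNIV_2 insert_commute zero_neq_one num1_eq_iff)
  show ?thesis unfolding u by simp
qed

lemma tomo: "tomogram \<rho> m \<alpha> \<beta> = (\<rho>$0$0 + \<rho>$1$1)/2 + complex_of_real m *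
   (complex_of_real (cos \<beta>) * (\<rho>$0$0 - \<rho>$1$1) + complex_of_real (cos \<alpha> * sin \<beta>) * (-(\<rho>$0$1 + \<rho>$1$0))
    + complex_of_real (sin \<alpha> * sin \<beta>) * (\<i> * (\<rho>$1$0 - \<rho>$0$1)))"
  unfolding tomogram_def U_op_def trace_def matrix_matrix_mult_def cscale_def Id2_def sigma_x_def sigma_y_def sigma_z_def
  by (simp add: sum2' mat_def algebra_simps)


lemma kernel_eq: "kernel a m \<alpha> \<beta> m' \<alpha>' \<beta>' = 1/2 * kdelta m m' * (1 + 3 * fst (ksign a) * cos \<alpha> * sin \<beta> * cos \<alpha>' * sin \<beta>'
     + 3 * fst (snd (ksign a)) * sin \<alpha> * sin \<beta> * sin \<alpha>' * sin \<beta>' + 3 * snd (snd (ksign a)) * cos \<beta> * cos \<beta>')"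
  by (simp add: kernel_def split: prod.splits)

theorem proposition3:
  fixes a :: pauli_axis and w :: "real \<Rightarrow> real \<Rightarrow> real \<Rightarrow> complex"
    and m \<alpha> \<beta> :: real
  assumes "w \<in> tomograms"
    and "m \<in> {-1/2, 1/2}" and "\<alpha> \<in> {0..2*pi}" and "\<beta> \<in> {0..pi}"
  shows "Sigma_breve a w m \<alpha> \<beta> =
         tint (\<lambda>m' \<alpha>' \<beta>'. complex_of_real (kernel a m \<alpha> \<beta> m' \<alpha>' \<beta>') * w m' \<alpha>' \<beta>')"
proof -
  define \<rho> where "\<rho> = (SOME \<rho>. qubit_state \<rho> \<and> tomogram \<rho> = w)"
  have ex: "\<exists>\<rho>. qubit_state \<rho> \<and> tomogram \<rho> = w" using assms(1) unfolding tomograms_def by blast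
  have w: "w = tomogram \<rho>" using someI_ex[OF ex] unfolding \<rho>_def by simp
  have L: "Sigma_breve a w = tomogram (pauli a ** \<rho> ** pauli a)"
    unfolding Sigma_breve_def \<rho>_def ..
  have R: "tint (\<lambda>m' \<alpha>' \<beta>'. complex_of_real (kernel a m \<alpha> \<beta> m' \<alpha>' \<beta>') * w m' \<alpha>' \<beta>')
     = (\<Sum>m'\<in>{-1/2, 1/2::real}. complex_of_real (kdelta m m') * ((\<rho>$0$0 + \<rho>$1$1)/2 + complex_of_real m' *
        (complex_of_real (fst (ksign a) * cos \<alpha> * sin \<beta>) * (-(\<rho>$0$1 + \<rho>$1$0))
         + complex_of_real (fst (snd (ksign a)) * sin \<alpha> * sin \<beta>) * (\<i> * (\<rho>$1$0 - \<rho>$0$1))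
         + complex_of_real (snd (snd (ksign a)) * cos \<beta>) * (\<rho>$0$0 - \<rho>$1$1))))"
    unfolding tint_def w tomo kernel_eq J ..
  have mc: "m = -1/2 \<or> m = 1/2" using assms(2) by auto
  from mc show ?thesis
  proof
    assume m: "m = -1/2"
    show ?thesis unfolding L R unfolding m
      by (cases a) (simp_all add: tomo kdelta_def ksign_def pauli_def sigma_x_def sigma_y_def sigma_z_def
         matrix_matrix_mult_def sum2' algebra_simps)
  next
    assume m: "m = 1/2"
    show ?thesis unfolding L R unfolding m
      by (cases a) (simp_all add: tomo kdelta_def ksign_def pauli_def sigma_x_def sigma_y_def sigma_z_def
         matrix_matrix_mult_def sum2' algebra_simps)
  qed
qed

end
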